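(* Let $k\geq 3$ be an integer and $\ell\geq 2$ an even integer, and let $G_1^{\{\ell,k\}}$ and $G_2^{\{\ell,k\}}$ be the indistinguishability graphs (for a fixed permutation $\sigma\neq\mathrm{id}$ of $[k]$). Let $\chi_1$ and $\chi_2$ be arbitrary $k$-partial $k$-colorings of $G_1^{\{\ell,k\}}$ and $G_2^{\{\ell,k\}}$, respectively. Then (1) $\chi_1((i,1))=\chi_1((i,\ell))$ for every $i\in[k]$; and (2) there exists $j\in[k]$ with $\chi_2((j,1))\neq\chi_2((j,\ell))$.
   Context: Let $[m]=\{1,\dots,m\}$. A $k$-partial $c$-coloring of a graph $H=(V,E)$ is a map $\gamma:V\to\{1,\dots,c\}$ such that every vertex $v$ has at least $\min\{k,\deg_H(v)\}$ neighbors $u$ with $\gamma(u)\neq\gamma(v)$. Path of cliques: for permutations $\tau_1,\dots,\tau_{\ell-1}$ of $[k]$, $P(\tau_1,\dots,\tau_{\ell-1})$ has vertex set $[k]\times[\ell]$ and edges $\{(a,i),(b,i)\}$ for $a\neq b$, $i\in[\ell]$, and $\{(a,i),(b,i+1)\}$ for $i\in[\ell-1]$, $a,b\in[k]$, $b\neq\tau_i(a)$. The $k$-edge-gadget transformation: given a graph $G$ and for each edge a chosen ordered pair $(u,v)$, keep all vertices of $G$, delete each edge $\{u,v\}$, and add $k$ new vertices $(u,v,1),\dots,(u,v,k)$ forming a clique together with edges $\{u,(u,v,j)\}$ for $j=1,\dots,k-1$ and $\{v,(u,v,k)\}$. Indistinguishability graphs: let $G_1=P(\tau_1,\dots,\tau_{\ell-1})$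 with all $\tau_i=\mathrm{id}$, and $G_2=P(\tau_1',\dots,\tau_{\ell-1}')$ with $\tau_i'=\mathrm{id}$ for $i\neq \ell/2$ and $\tau'_{\ell/2}=\sigma$, where $\sigma$ is a fixed permutation of $[k]$ different from the identity. $G_1^{\{\ell,k\}}$ (resp. $G_2^{\{\ell,k\}}$) is obtained from $G_1$ (resp. $G_2$) by the $k$-edge-gadget transformation, where an edge $\{(a,i),(b,i)\}$ with $a<b$ is oriented as $((a,i),(b,i))$ and an edge $\{(a,i),(b,i+1)\}$ is oriented as $((a,i),(b,i+1))$. The vertices $(i,1)$ and $(i,\ell)$ are original vertices of the path of cliques. *)

theory Defs
  imports "HOL-Combinatorics.Permutations"
begin

definition nbrs :: "'a set \<Rightarrow> ('a \<Rightarrow> 'a \<Rightarrow> bool) \<Rightarrow> 'a \<Rightarrow> 'a set" where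
  "nbrs V adj v = {u \<in> V. adj v u}"

definition partial_coloring ::
  "'a set \<Rightarrow> ('a \<Rightarrow> 'a \<Rightarrow> bool) \<Rightarrow> nat \<Rightarrow> nat \<Rightarrow> ('a \<Rightarrow> nat) \<Rightarrow> bool" where
  "partial_coloring V adj k c \<gamma> \<longleftrightarrow>
     (\<forall>v\<in>V. \<gamma> v \<in> {1..c}) \<and>
     (\<forall>v\<in>V. card {u \<in> nbrs V adj v. \<gamma> u \<noteq> \<gamma> v} \<ge> min k (card (nbrs V adj v)))"

text \<open>Vertices of the k-edge-gadget transformation: original vertices and gadget vertices
  (u,v,j) for an oriented edge (u,v).\<close>

datatype 'a gv = Orig 'a | Gad 'a 'a nat

definition gadget_V :: "'a set \<Rightarrow> ('a \<times> 'a) set \<Rightarrow> nat \<Rightarrow> 'a gv set" where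
  "gadget_V V D k = Orig ` V \<union> {Gad u v j | u v j. (u, v) \<in> D \<and> j \<in> {1..k}}"

definition gadget_adj0 :: "('a \<times> 'a) set \<Rightarrow> nat \<Rightarrow> 'a gv \<Rightarrow> 'a gv \<Rightarrow> bool" where
  "gadget_adj0 D k x y \<longleftrightarrow>
     (\<exists>u v j j'. (u, v) \<in> D \<and> j \<in> {1..k} \<and> j' \<in> {1..k} \<and> j \<noteq> j' \<and>
                x = Gad u v j \<and> y = Gad u v j') \<or>
     (\<exists>u v j. (u, v) \<in> D \<and> j \<in> {1..k-1} \<and> x = Orig u \<and> y = Gad u v j) \<or>
     (\<exists>u v. (u, v) \<in> D \<and> x = Orig v \<and> y = Gad u v k)"

definition gadget_adj :: "('a \<times> 'a) set \<Rightarrow> nat \<Rightarrow> 'a gv \<Rightarrow> 'a gv \<Rightarrow> bool" where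
  "gadget_adj D k x y \<longleftrightarrow> gadget_adj0 D k x y \<or> gadget_adj0 D k y x"

text \<open>Path of cliques P(tau_1,...,tau_{l-1}) on [k] x [l], given by its edges with the
  orientation used in the paper (the edges of the graph are exactly the unordered
  versions of these arcs).\<close>

definition poc_V :: "nat \<Rightarrow> nat \<Rightarrow> (nat \<times> nat) set" where
  "poc_V k l = {1..k} \<times> {1..l}"

definition poc_arcs :: "nat \<Rightarrow> nat \<Rightarrow> (nat \<Rightarrow> nat \<Rightarrow> nat) \<Rightarrow> ((nat \<times> nat) \<times> (nat \<times> nat)) set" where
  "poc_arcs k l \<tau> =
     {((a, i), (b, i)) | a b i. a \<in> {1..k} \<and> b \<in> {1..k} \<and> a < b \<and> i \<in> {1..l}} \<union>
     {((a, i), (b, Suc i)) | a b i. a \<in> {1..k} \<and> b \<in> {1..k} \<and> i \<in> {1..l-1} \<and> b \<noteq> \<tau> i a}"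

definition tau1 :: "nat \<Rightarrow> nat \<Rightarrow> nat" where
  "tau1 i = id"

definition tau2 :: "nat \<Rightarrow> (nat \<Rightarrow> nat) \<Rightarrow> nat \<Rightarrow> nat \<Rightarrow> nat" where
  "tau2 l \<sigma> i = (if i = l div 2 then \<sigma> else id)"

definition G_V :: "nat \<Rightarrow> nat \<Rightarrow> (nat \<Rightarrow> nat \<Rightarrow> nat) \<Rightarrow> (nat \<times> nat) gv set" where
  "G_V l k \<tau> = gadget_V (poc_V k l) (poc_arcs k l \<tau>) k"

definition G_adj :: "nat \<Rightarrow> nat \<Rightarrow> (nat \<Rightarrow> nat \<Rightarrow> nat) \<Rightarrow> (nat \<times> nat) gv \<Rightarrow> (nat \<times> nat) gv \<Rightarrow> bool" where
  "G_adj l k \<tau> = gadget_adj (poc_arcs k l \<tau>) k"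

end

theory Submission
  imports Defs
begin

lemma all_nbrs_differ:
  assumes pc: "partial_coloring W adj k c \<chi>" and x: "x \<in> W"
    and fin: "finite (nbrs W adj x)" and cd: "card (nbrs W adj x) \<le> k"
    and y: "y \<in> nbrs W adj x"
  shows "\<chi> y \<noteq> \<chi> x"
proof -
  let ?S = "{u \<in> nbrs W adj x. \<chi> u \<noteq> \<chi> x}"
  have "card ?S \<ge> card (nbrs W adj x)" using pc x cd unfolding partial_coloring_def by auto
  moreover have "?S \<subseteq> nbrs W adj x" by auto
  ultimately have "?S = nbrs W adj x" using fin by (meson card_seteq)
  thus ?thesis using y by blast
qed

lemma gad_nbrs:
  assumes "(u,v) \<in> D" "j \<in> {1..k}"
  shows "nbrs (gadget_V V D k) (gadget_adj D k) (Gad u v j) \<subseteq>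
           Gad u v ` ({1..k} - {j}) \<union> {Orig (if j < k then u else v)}"
proof
  fix y assume "y \<in> nbrs (gadget_V V D k) (gadget_adj D k) (Gad u v j)"
  hence "gadget_adj0 D k (Gad u v j) y \<or> gadget_adj0 D k y (Gad u v j)"
    unfolding nbrs_def gadget_adj_def by auto
  thus "y \<in> Gad u v ` ({1..k} - {j}) \<union> {Orig (if j < k then u else v)}"
    unfolding gadget_adj0_def using assms by auto
qed

lemma gad_nbrs_in:
  assumes uv: "(u,v) \<in> D" and j: "j \<in> {1..k}" and "u \<in> V" "v \<in> V"
  shows "Gad u v ` ({1..k} - {j}) \<union> {Orig (if j < k then u else v)} \<subseteq>
         nbrs (gadget_V V D k) (gadget_adj D k) (Gad u v j)"
proof
  fix y assume y: "y \<in> Gad u v ` ({1..k} - {j}) \<union> {Orig (if j < k then u else v)}"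
  have "y \<in> gadget_V V D k"
    using y assms unfolding gadget_V_def by auto
  moreover have "gadget_adj0 D k (Gad u v j) y \<or> gadget_adj0 D k y (Gad u v j)"
  proof (cases "y = Orig (if j < k then u else v)")
    case True
    show ?thesis
    proof (cases "j < k")
      case True
      hence "gadget_adj0 D k y (Gad u v j)" using \<open>y = _\<close> uv j unfolding gadget_adj0_def by auto
      thus ?thesis ..
    next
      case False
      hence "j = k" using j by auto
      hence "gadget_adj0 D k y (Gad u v j)" using \<open>y = _\<close> uv j False unfolding gadget_adj0_def by auto
      thus ?thesis ..
    qed
  next
    case False
    then obtain j' where "j' \<in> {1..k} - {j}" "y = Gad u v j'" using y by blast
    hence "gadget_adj0 D k (Gad u v j) y" using uv j unfolding gadget_adj0_def by auto
    thus ?thesis ..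
  qed
  ultimately show "y \<in> nbrs (gadget_V V D k) (gadget_adj D k) (Gad u v j)"
    unfolding nbrs_def gadget_adj_def by auto
qed
lemma gad_card:
  assumes "j \<in> {1..k}"
  shows "card (Gad u v ` ({1..k} - {j}) \<union> {Orig w}) \<le> k"
proof -
  have "card (Gad u v ` ({1..k} - {j}) \<union> {Orig w}) \<le> card (Gad u v ` ({1..k} - {j})) + card {Orig w}"
    by (rule card_Un_le)
  also have "card (Gad u v ` ({1..k} - {j})) \<le> card ({1..k} - {j})" by (rule card_image_le) simp
  also have "card ({1..k} - {j}) = k - 1" using assms by simp
  finally show ?thesis using assms by simp
qed
lemma gadget_arc:
  assumes pc: "partial_coloring (gadget_V V D k) (gadget_adj D k) k k \<chi>"
    and uv: "(u,v) \<in> D" and uV: "u \<in> V" and vV: "v \<in> V" and k2: "k \<ge> 2"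
  shows "\<chi> (Orig u) \<noteq> \<chi> (Orig v)"
proof -
  let ?W = "gadget_V V D k" and ?A = "gadget_adj D k"
  have diff: "\<chi> y \<noteq> \<chi> (Gad u v j)" if j: "j \<in> {1..k}"
      and y: "y \<in> Gad u v ` ({1..k} - {j}) \<union> {Orig (if j < k then u else v)}" for j y
  proof (rule all_nbrs_differ[OF pc])
    show "Gad u v j \<in> ?W" using uv j unfolding gadget_V_def by auto
    have sub: "nbrs ?W ?A (Gad u v j) \<subseteq> Gad u v ` ({1..k} - {j}) \<union> {Orig (if j < k then u else v)}"
      by (rule gad_nbrs[OF uv j])
    show "finite (nbrs ?W ?A (Gad u v j))" by (rule finite_subset[OF sub]) simp
    show "card (nbrs ?W ?A (Gad u v j)) \<le> k"
      by (rule le_trans[OF card_mono[OF _ sub] gad_card[OF j]]) simp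
    show "y \<in> nbrs ?W ?A (Gad u v j)" using gad_nbrs_in[OF uv j uV vV] y by blast
  qed
  have inj: "inj_on (\<lambda>j. \<chi> (Gad u v j)) {1..k}"
  proof (rule inj_onI)
    fix a b assume a: "a \<in> {1..k}" and b: "b \<in> {1..k}" and e: "\<chi> (Gad u v a) = \<chi> (Gad u v b)"
    show "a = b"
    proof (rule ccontr)
      assume "a \<noteq> b"
      hence "\<chi> (Gad u v b) \<noteq> \<chi> (Gad u v a)" using diff[OF a, of "Gad u v b"] b by auto
      thus False using e by simp
    qed
  qed
  have rng: "(\<lambda>j. \<chi> (Gad u v j)) ` {1..k} \<subseteq> {1..k}"
  proof
    fix c assume "c \<in> (\<lambda>j. \<chi> (Gad u v j)) ` {1..k}"
    then obtain j where j: "j \<in> {1..k}" and c: "c = \<chi> (Gad u v j)" by auto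
    have "Gad u v j \<in> ?W" using uv j unfolding gadget_V_def by auto
    thus "c \<in> {1..k}" using pc c unfolding partial_coloring_def by blast
  qed
  have img: "(\<lambda>j. \<chi> (Gad u v j)) ` {1..k} = {1..k}"
    using card_image[OF inj] rng by (simp add: card_subset_eq)
  have "Orig u \<in> ?W" using uV unfolding gadget_V_def by auto
  hence "\<chi> (Orig u) \<in> {1..k}" using pc unfolding partial_coloring_def by blast
  hence "\<chi> (Orig u) \<in> (\<lambda>j. \<chi> (Gad u v j)) ` {1..k}" by (simp only: img)
  then obtain j where j: "j \<in> {1..k}" and cj: "\<chi> (Orig u) = \<chi> (Gad u v j)" by (rule imageE) simp
  have "j = k"
  proof (rule ccontr)
    assume "j \<noteq> k" hence "j < k" using j by auto
    hence "Orig u \<in> Gad u v ` ({1..k} - {j}) \<union> {Orig (if j < k then u else v)}" by simp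
    thus False using diff[OF j] cj by metis
  qed
  have "k \<in> {1..k}" using k2 by auto
  moreover have "Orig v \<in> Gad u v ` ({1..k} - {k}) \<union> {Orig (if k < k then u else v)}" by simp
  ultimately have "\<chi> (Orig v) \<noteq> \<chi> (Gad u v k)" using diff by blast
  thus ?thesis using cj \<open>j = k\<close> by simp
qed

lemma arcs_sub:
  assumes "(x,y) \<in> poc_arcs k l \<tau>"
  shows "x \<in> poc_V k l \<and> y \<in> poc_V k l"
  using assms unfolding poc_arcs_def poc_V_def by auto

lemma proper:
  assumes pc: "partial_coloring (G_V l k \<tau>) (G_adj l k \<tau>) k k \<chi>" and k2: "k \<ge> 2"
    and xy: "(x,y) \<in> poc_arcs k l \<tau>"
  shows "\<chi> (Orig x) \<noteq> \<chi> (Orig y)"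
  using gadget_arc[OF pc[unfolded G_V_def G_adj_def] xy _ _ k2] arcs_sub[OF xy] by blast

lemma layer_step:
  assumes pc: "partial_coloring (G_V l k \<tau>) (G_adj l k \<tau>) k k \<chi>" and k2: "k \<ge> 2"
    and i: "i \<in> {1..l-1}" and a: "a \<in> {1..k}" and ta: "\<tau> i a \<in> {1..k}"
  shows "\<chi> (Orig (a,i)) = \<chi> (Orig (\<tau> i a, Suc i))"
proof -
  let ?f = "\<lambda>b. \<chi> (Orig (b, Suc i))"
  have inj: "inj_on ?f {1..k}"
  proof (rule inj_onI)
    fix b c assume b: "b \<in> {1..k}" and c: "c \<in> {1..k}" and e: "?f b = ?f c"
    show "b = c"
    proof (rule ccontr)
      assume "b \<noteq> c"
      hence "b < c \<or> c < b" by auto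
      thus False
      proof
        assume "b < c"
        hence "((b, Suc i), (c, Suc i)) \<in> poc_arcs k l \<tau>" using b c i unfolding poc_arcs_def by auto
        thus False using proper[OF pc k2] e by blast
      next
        assume "c < b"
        hence "((c, Suc i), (b, Suc i)) \<in> poc_arcs k l \<tau>" using b c i unfolding poc_arcs_def by auto
        thus False using proper[OF pc k2] e by metis
      qed
    qed
  qed
  have inV: "\<chi> (Orig x) \<in> {1..k}" if "x \<in> poc_V k l" for x
  proof -
    have "Orig x \<in> G_V l k \<tau>" using that unfolding G_V_def gadget_V_def by auto
    thus ?thesis using pc unfolding partial_coloring_def by blast
  qed
  have rng: "?f ` {1..k} \<subseteq> {1..k}"
    using inV i unfolding poc_V_def by auto
  have img: "?f ` {1..k} = {1..k}"
    using card_image[OF inj] rng by (simp add: card_subset_eq)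
  have "\<chi> (Orig (a,i)) \<in> {1..k}" using inV a i unfolding poc_V_def by auto
  hence "\<chi> (Orig (a,i)) \<in> ?f ` {1..k}" by (simp only: img)
  then obtain b where b: "b \<in> {1..k}" and eb: "\<chi> (Orig (a,i)) = ?f b" by (rule imageE) simp
  have "b = \<tau> i a"
  proof (rule ccontr)
    assume "b \<noteq> \<tau> i a"
    hence "((a, i), (b, Suc i)) \<in> poc_arcs k l \<tau>" using a b i unfolding poc_arcs_def by auto
    thus False using proper[OF pc k2] eb by blast
  qed
  thus ?thesis using eb by simp
qed

lemma ids:
  assumes pc: "partial_coloring (G_V l k \<tau>) (G_adj l k \<tau>) k k \<chi>" and k2: "k \<ge> 2"
    and m: "1 \<le> m" and mn: "m \<le> n" and nl: "n \<le> l"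
    and idt: "\<And>i. m \<le> i \<Longrightarrow> i < n \<Longrightarrow> \<tau> i = id" and a: "a \<in> {1..k}"
  shows "\<chi> (Orig (a,m)) = \<chi> (Orig (a,n))"
  using mn nl idt
proof (induction n rule: dec_induct)
  case base
  then show ?case by simp
next
  case (step n)
  have mn': "m \<le> n" using step.hyps(1) .
  have tn: "\<tau> n = id" using step.prems(2)[of n] mn' by (simp add: id_def)
  have "n \<in> {1..l-1}" using mn' step.prems(1) m by auto
  hence "\<chi> (Orig (a,n)) = \<chi> (Orig (\<tau> n a, Suc n))"
    using layer_step[OF pc k2 _ a] tn a by simp
  moreover have "\<chi> (Orig (a,m)) = \<chi> (Orig (a,n))"
    using step.IH step.prems by simp
  ultimately show ?case using tn by simp
qed


theorem fact1:
  fixes k l :: nat and \<sigma> :: "nat \<Rightarrow> nat" and \<chi>1 \<chi>2 :: "(nat \<times> nat) gv \<Rightarrow> nat"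
  assumes "k \<ge> 3" and "l \<ge> 2" and "even l"
    and "\<sigma> permutes {1..k}" and "\<sigma> \<noteq> id"
    and "partial_coloring (G_V l k tau1) (G_adj l k tau1) k k \<chi>1"
    and "partial_coloring (G_V l k (tau2 l \<sigma>)) (G_adj l k (tau2 l \<sigma>)) k k \<chi>2"
  shows "(\<forall>i\<in>{1..k}. \<chi>1 (Orig (i, 1)) = \<chi>1 (Orig (i, l))) \<and>
         (\<exists>j\<in>{1..k}. \<chi>2 (Orig (j, 1)) \<noteq> \<chi>2 (Orig (j, l)))"
proof
  have k2: "k \<ge> 2" using assms(1) by simp
  show "\<forall>i\<in>{1..k}. \<chi>1 (Orig (i, 1)) = \<chi>1 (Orig (i, l))"
  proof
    fix i assume i: "i \<in> {1..k}"
    show "\<chi>1 (Orig (i, 1)) = \<chi>1 (Orig (i, l))"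
      by (rule ids[OF assms(6) k2 _ _ _ _ i]) (use assms(2) in \<open>auto simp: tau1_def\<close>)
  qed
  obtain j where sj: "\<sigma> j \<noteq> j" using assms(5) by (metis eq_id_iff)
  have j: "j \<in> {1..k}" using sj assms(4) by (meson permutes_not_in)
  have jj: "\<sigma> j \<in> {1..k}" using permutes_in_image[OF assms(4)] j by blast
  define h where "h = l div 2"
  have h1: "1 \<le> h" "Suc h \<le> l" using assms(2,3) unfolding h_def by auto
  let ?t = "tau2 l \<sigma>"
  have e1: "\<chi>2 (Orig (j, 1)) = \<chi>2 (Orig (j, h))"
    by (rule ids[OF assms(7) k2 _ _ _ _ j]) (use h1 in \<open>auto simp: tau2_def h_def\<close>)
  have "h \<in> {1..l-1}" using h1 by auto
  hence e2: "\<chi>2 (Orig (j, h)) = \<chi>2 (Orig (\<sigma> j, Suc h))"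
    using layer_step[OF assms(7) k2 _ j] jj by (simp add: tau2_def h_def)
  have e3: "\<chi>2 (Orig (\<sigma> j, Suc h)) = \<chi>2 (Orig (\<sigma> j, l))"
    by (rule ids[OF assms(7) k2 _ _ _ _ jj]) (use h1 in \<open>auto simp: tau2_def h_def\<close>)
  have "\<chi>2 (Orig (\<sigma> j, l)) \<noteq> \<chi>2 (Orig (j, l))"
  proof (cases "j < \<sigma> j")
    case True
    hence "((j, l), (\<sigma> j, l)) \<in> poc_arcs k l ?t" using j jj h1 unfolding poc_arcs_def by auto
    thus ?thesis using proper[OF assms(7) k2] by metis
  next
    case False
    hence "\<sigma> j < j" using sj by simp
    hence "((\<sigma> j, l), (j, l)) \<in> poc_arcs k l ?t" using j jj h1 unfolding poc_arcs_def by auto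
    thus ?thesis using proper[OF assms(7) k2] by metis
  qed
  thus "\<exists>j\<in>{1..k}. \<chi>2 (Orig (j, 1)) \<noteq> \<chi>2 (Orig (j, l))"
    using e1 e2 e3 j by metis
qed

end
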